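(* For every $\theta^{\max}\in(0,\pi]$ and every real $\theta<\theta^{\max}$, $$\sin\theta\ge \theta+\left(\frac{\sin\theta^{\max}-\theta^{\max}}{(\theta^{\max})^2}\right)\theta^2,$$ and for every $\theta^{\min}\in[-\pi,0)$ and every real $\theta>\theta^{\min}$, $$\sin\theta\le \theta+\left(\frac{\sin\theta^{\min}-\theta^{\min}}{(\theta^{\min})^2}\right)\theta^2.$$ Moreover, for all real $\theta$, $1-\tfrac12\theta^2\le\cos\theta\le 1$. *)

theory Defs
  imports Complex_Main
begin

end

theory Submission
  imports Defs
begin

lemma xcos_le_sin:
  fixes y :: real
  assumes "0 \<le> y" "y \<le> pi"
  shows "y * cos y \<le> sin y"
proof -
  let ?k = "\<lambda>y. sin y - y * cos y"
  have "?k 0 \<le> ?k y"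
  proof (rule DERIV_nonneg_imp_nondecreasing[OF assms(1)])
    fix x assume x: "0 \<le> x" "x \<le> y"
    have "(?k has_real_derivative x * sin x) (at x)"
      by (auto intro!: derivative_eq_intros simp: algebra_simps)
    moreover have "x * sin x \<ge> 0" using x assms by (intro mult_nonneg_nonneg sin_ge_zero) auto
    ultimately show "\<exists>d. (?k has_real_derivative d) (at x) \<and> d \<ge> 0" by blast
  qed
  then show ?thesis by simp
qed

lemma h_nonpos:
  fixes x :: real
  assumes "0 \<le> x" "x \<le> pi"
  shows "x * (1 + cos x) - 2 * sin x \<le> 0"
proof -
  define y where "y = x / 2"
  have xy: "x = 2 * y" using y_def by simp
  have c: "cos x = 2 * (cos y)\<^sup>2 - 1" unfolding xy by (rule cos_double_cos)
  have s: "sin x = 2 * sin y * cos y" unfolding xy by (rule sin_double)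
  have eq: "x * (1 + cos x) - 2 * sin x = 4 * cos y * (y * cos y - sin y)"
    by (subst c, subst s) (simp add: xy power2_eq_square algebra_simps)
  have "cos y \<ge> 0" using assms y_def by (intro cos_ge_zero) auto
  moreover have "y * cos y - sin y \<le> 0" using xcos_le_sin[of y] assms y_def by auto
  ultimately show ?thesis unfolding eq by (simp add: mult_nonneg_nonpos)
qed

lemma g_mono:
  fixes s t :: real
  assumes "0 < s" "s \<le> t" "t \<le> pi"
  shows "(sin t - t) / t\<^sup>2 \<le> (sin s - s) / s\<^sup>2"
proof -
  let ?g = "\<lambda>x. (sin x - x) / x\<^sup>2"
  show ?thesis
  proof (rule DERIV_nonpos_imp_nonincreasing[OF assms(2), where f = ?g])
    fix x assume x: "s \<le> x" "x \<le> t"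
    then have xp: "x > 0" using assms by auto
    have "(?g has_real_derivative ((cos x - 1) * x\<^sup>2 - (sin x - x) * (2 * x)) / (x\<^sup>2)\<^sup>2) (at x)"
      using xp by (auto intro!: derivative_eq_intros simp: power2_eq_square)
    moreover have "((cos x - 1) * x\<^sup>2 - (sin x - x) * (2 * x)) = x * (x * (1 + cos x) - 2 * sin x)"
      by (simp add: power2_eq_square algebra_simps)
    moreover have "x * (x * (1 + cos x) - 2 * sin x) \<le> 0"
      using h_nonpos[of x] xp x assms by (simp add: mult_nonneg_nonpos)
    ultimately show "\<exists>d. (?g has_real_derivative d) (at x) \<and> d \<le> 0"
      by (intro exI[of _ "((cos x - 1) * x\<^sup>2 - (sin x - x) * (2 * x)) / (x\<^sup>2)\<^sup>2"]) (auto intro: divide_nonpos_nonneg)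
  qed
qed

lemma part1:
  fixes tmax t :: real
  assumes "0 < tmax" "tmax \<le> pi" "t < tmax"
  shows "sin t \<ge> t + ((sin tmax - tmax) / tmax\<^sup>2) * t\<^sup>2"
proof (cases "t \<le> 0")
  case True
  have "sin (-t) \<le> -t" by (rule sin_x_le_x) (use True in auto)
  then have a: "sin t \<ge> t" by simp
  have "sin tmax \<le> tmax" using assms by (intro sin_x_le_x) auto
  then have "(sin tmax - tmax) / tmax\<^sup>2 \<le> 0" by (simp add: divide_nonpos_nonneg)
  then have "((sin tmax - tmax) / tmax\<^sup>2) * t\<^sup>2 \<le> 0" by (rule mult_nonpos_nonneg) simp
  then show ?thesis using a by linarith
next
  case False
  then have tp: "t > 0" by simp
  have "(sin tmax - tmax) / tmax\<^sup>2 \<le> (sin t - t) / t\<^sup>2"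
    using g_mono[of t tmax] tp assms by auto
  then have "((sin tmax - tmax) / tmax\<^sup>2) * t\<^sup>2 \<le> (sin t - t) / t\<^sup>2 * t\<^sup>2"
    by (rule mult_right_mono) simp
  also have "\<dots> = sin t - t" using tp by simp
  finally show ?thesis by linarith
qed

theorem corollary3:
  shows "(\<forall>tmax::real. \<forall>t::real. 0 < tmax \<and> tmax \<le> pi \<and> t < tmax \<longrightarrow>
            sin t \<ge> t + ((sin tmax - tmax) / tmax\<^sup>2) * t\<^sup>2)
       \<and> (\<forall>tmin::real. \<forall>t::real. -pi \<le> tmin \<and> tmin < 0 \<and> t > tmin \<longrightarrow>
            sin t \<le> t + ((sin tmin - tmin) / tmin\<^sup>2) * t\<^sup>2)
       \<and> (\<forall>t::real. 1 - t\<^sup>2 / 2 \<le> cos t \<and> cos t \<le> 1)"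
proof (intro conjI allI impI)
  fix tmax t :: real
  assume "0 < tmax \<and> tmax \<le> pi \<and> t < tmax"
  then show "sin t \<ge> t + ((sin tmax - tmax) / tmax\<^sup>2) * t\<^sup>2" using part1 by blast
next
  fix tmin t :: real
  assume a: "-pi \<le> tmin \<and> tmin < 0 \<and> t > tmin"
  have "sin (-t) \<ge> -t + ((sin (-tmin) - (-tmin)) / (-tmin)\<^sup>2) * (-t)\<^sup>2"
    using part1[of "-tmin" "-t"] a by auto
  have e: "(sin (-tmin) - (-tmin)) / tmin\<^sup>2 = - ((sin tmin - tmin) / tmin\<^sup>2)"
    by (simp add: minus_divide_left)
  have "sin (-t) \<ge> -t + (- ((sin tmin - tmin) / tmin\<^sup>2)) * t\<^sup>2"
    using \<open>sin (-t) \<ge> _\<close> by (simp only: e power2_minus)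
  then show "sin t \<le> t + ((sin tmin - tmin) / tmin\<^sup>2) * t\<^sup>2"
    by (simp only: sin_minus)
next
  fix t :: real
  have "\<bar>sin (t/2)\<bar> \<le> \<bar>t/2\<bar>" by (rule abs_sin_x_le_abs_x)
  then have "(sin (t/2))\<^sup>2 \<le> (t/2)\<^sup>2" by (metis abs_le_square_iff)
  moreover have "cos t = 1 - 2 * (sin (t/2))\<^sup>2"
    using cos_double_sin[of "t/2"] by simp
  ultimately show "1 - t\<^sup>2 / 2 \<le> cos t" by (simp add: power2_eq_square)
next
  fix t :: real
  show "cos t \<le> 1" by simp
qed

end
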